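(* Let $u,v$ be distinct points in the plane and $\gamma_1<\gamma_2$ angles such that the polar angle $\varphi(uv)$ of $\overrightarrow{uv}$ lies in $[\gamma_1,\gamma_2)$. Let $R=\overline{D(u,|uv|)\cap C_u(\gamma_1,\gamma_2)}$ (a closed sector with apex $u$ and with $v$ on its arc), and suppose $\alpha=\max\{\varphi(uv)-\gamma_1,\ \gamma_2-\varphi(uv)\}<\pi/3$. Then for every $w\in R\setminus\{u\}$, $$\frac{|uw|}{|uv|-|vw|}\leq\left(1-2\sin\frac{\alpha}{2}\right)^{-1}.$$
   Context: $D(a,\rho)$ is the open disk of center $a$ and radius $\rho$, and $\overline{X}$ denotes the closure of $X$. Polar angles are measured from the positive $x$-axis, modulo $2\pi$; $\varphi(uv)$ is the polar angle of the vector $\overrightarrow{uv}$. $C_u(\gamma_1,\gamma_2)$ is the set of points $w\neq u$ for which the polar angle of $\overrightarrow{uw}$ lies in $[\gamma_1,\gamma_2)$. *)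

theory Defs
  imports "HOL-Analysis.Analysis"
begin

text \<open>The plane is modelled by the complex numbers. The polar angle of the
vector from u to w (w \<noteq> u) is Arg (w - u), taken modulo 2 pi.\<close>

definition polar_angle :: "complex \<Rightarrow> complex \<Rightarrow> real" where
  "polar_angle u w = Arg (w - u)"

definition angle_in :: "real \<Rightarrow> real \<Rightarrow> real \<Rightarrow> bool" where
  "angle_in \<theta> g1 g2 \<longleftrightarrow> (\<exists>k::int. g1 \<le> \<theta> + 2 * pi * of_int k \<and> \<theta> + 2 * pi * of_int k < g2)"

definition cone :: "complex \<Rightarrow> real \<Rightarrow> real \<Rightarrow> complex set" where
  "cone u g1 g2 = {w. w \<noteq> u \<and> angle_in (polar_angle u w) g1 g2}"

end

theory Submission
  imports Defs
begin

lemma cis_shift: "cis (x + 2 * pi * of_int k) = cis x"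
proof -
  have "cis (x + 2 * pi * of_int k) = cis x * cis (2 * pi * of_int k)" by (simp only: cis_mult)
  also have "cis (2 * pi * of_int k) = 1" by (rule cis_multiple_2pi) simp
  finally show ?thesis by (simp del: cis_multiple_2pi)
qed

lemma sin_half_bound:
  assumes "\<bar>t\<bar> \<le> \<alpha>" "\<alpha> \<le> pi"
  shows "\<bar>sin (t/2)\<bar> \<le> sin (\<alpha>/2)"
proof -
  have "\<bar>sin (t/2)\<bar> = sin (\<bar>t\<bar>/2)"
  proof (cases "t \<ge> 0")
    case True
    then have "sin (t/2) \<ge> 0" using assms by (intro sin_ge_zero) auto
    then show ?thesis using True by simp
  next
    case False
    then have "sin (-t/2) \<ge> 0" using assms by (intro sin_ge_zero) auto
    then show ?thesis using False by simp
  qed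
  also have "sin (\<bar>t\<bar>/2) \<le> sin (\<alpha>/2)"
    using assms by (intro sin_monotone_2pi_le) auto
  finally show ?thesis .
qed

lemma key:
  assumes a: "a \<noteq> 0" and z: "z \<noteq> 0"
    and th: "\<bar>(Arg z + 2 * pi * of_int k) - (Arg a + 2 * pi * of_int j)\<bar> \<le> \<alpha>"
    and al: "\<alpha> \<le> pi"
  shows "cmod (of_real (cmod z / cmod a) * a - z) \<le> 2 * sin (\<alpha>/2) * cmod z"
proof -
  define A where "A = Arg a + 2 * pi * of_int j"
  define B where "B = Arg z + 2 * pi * of_int k"
  have ca: "a = of_real (cmod a) * cis A"
    using rcis_cmod_Arg[of a] by (simp add: A_def cis_shift rcis_def)
  have cz: "z = of_real (cmod z) * cis B"
    using rcis_cmod_Arg[of z] by (simp add: B_def cis_shift rcis_def)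
  have "of_real (cmod z / cmod a) * a - z = of_real (cmod z) * (cis A - cis B)"
    using a by (subst ca, subst (2) cz) (simp add: field_simps)
  also have "cis A - cis B = cis B * (cis (A - B) - 1)"
    by (simp add: algebra_simps cis_mult)
  finally have eq: "cmod (of_real (cmod z / cmod a) * a - z) = cmod z * cmod (cis (A - B) - 1)"
    by (simp add: norm_mult)
  have "cmod (cis (A - B) - 1) = 2 * \<bar>sin ((A - B)/2)\<bar>"
    using dist_exp_i_1[of "A - B"] by (simp add: cis_conv_exp mult.commute)
  also have "\<dots> \<le> 2 * sin (\<alpha>/2)"
    using sin_half_bound[of "A - B" \<alpha>] th al by (simp add: A_def B_def abs_minus_commute)
  finally show ?thesis using eq by (simp add: mult_left_mono mult.commute)
qed

theorem corollary4:
  fixes u v :: complex and \<gamma>1 \<gamma>2 \<phi> \<alpha> :: real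
  assumes "u \<noteq> v"
    and "\<gamma>1 < \<gamma>2"
    and "\<exists>k::int. \<phi> = polar_angle u v + 2 * pi * of_int k"
    and "\<gamma>1 \<le> \<phi>" and "\<phi> < \<gamma>2"
    and "\<alpha> = max (\<phi> - \<gamma>1) (\<gamma>2 - \<phi>)"
    and "\<alpha> < pi / 3"
  shows "\<forall>w \<in> closure (ball u (dist u v) \<inter> cone u \<gamma>1 \<gamma>2) - {u}.
           dist u w / (dist u v - dist v w) \<le> inverse (1 - 2 * sin (\<alpha> / 2))"
proof -
  define d where "d = dist u v"
  define s where "s = sin (\<alpha>/2)"
  have d0: "d > 0" using assms(1) by (simp add: d_def)
  have a0: "\<alpha> \<ge> 0" using assms by simp
  have s0: "s \<ge> 0" using a0 assms(7) by (simp add: s_def sin_ge_zero)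
  have "sin (\<alpha>/2) < sin (pi/6)" using a0 assms(7) by (intro sin_monotone_2pi) auto
  then have s1: "s < 1/2" by (simp add: s_def sin_30)
  obtain j :: int where j: "\<phi> = Arg (v - u) + 2 * pi * of_int j"
    using assms(3) by (auto simp: polar_angle_def)
  define S where "S = {w. dist u w \<le> d \<and>
      cmod (of_real (dist u w / d) * (v - u) - (w - u)) \<le> 2 * s * dist u w}"
  have "closed S" unfolding S_def
    using d0 by (intro closed_Collect_conj closed_Collect_le continuous_intros) auto
  moreover have "ball u d \<inter> cone u \<gamma>1 \<gamma>2 \<subseteq> S"
  proof
    fix w assume w: "w \<in> ball u d \<inter> cone u \<gamma>1 \<gamma>2"
    then have wu: "w \<noteq> u" and "angle_in (Arg (w - u)) \<gamma>1 \<gamma>2"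
      by (auto simp: cone_def polar_angle_def)
    then obtain k :: int where k: "\<gamma>1 \<le> Arg (w - u) + 2 * pi * of_int k"
      "Arg (w - u) + 2 * pi * of_int k < \<gamma>2" by (auto simp: angle_in_def)
    have th: "\<bar>(Arg (w-u) + 2 * pi * of_int k) - (Arg (v-u) + 2 * pi * of_int j)\<bar> \<le> \<alpha>"
      using k j assms(6) by auto
    have h1: "v - u \<noteq> 0" "w - u \<noteq> 0" "\<alpha> \<le> pi"
      using assms(1) wu apply auto[2] using assms(7) pi_gt_zero by linarith
    have "cmod (of_real (cmod (w-u) / cmod (v-u)) * (v-u) - (w-u)) \<le> 2 * sin (\<alpha>/2) * cmod (w-u)"
      by (rule key[OF h1(1) h1(2) th h1(3)])
    moreover have "dist u w = cmod (w - u)" "d = cmod (v - u)"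
      by (auto simp: d_def dist_norm norm_minus_commute)
    ultimately show "w \<in> S" using w by (auto simp: S_def s_def)
  qed
  ultimately have cl: "closure (ball u d \<inter> cone u \<gamma>1 \<gamma>2) \<subseteq> S"
    by (simp add: closure_minimal)
  show ?thesis
  proof
    fix w assume "w \<in> closure (ball u (dist u v) \<inter> cone u \<gamma>1 \<gamma>2) - {u}"
    then have wS: "w \<in> S" and wu: "w \<noteq> u" using cl by (auto simp: d_def)
    define r where "r = dist u w"
    have r0: "r > 0" using wu by (simp add: r_def)
    have rd: "r \<le> d" and pw: "cmod (of_real (r / d) * (v - u) - (w - u)) \<le> 2 * s * r"
      using wS by (auto simp: S_def r_def)
    define p where "p = u + of_real (r/d) * (v - u)"
    have "v - p = of_real (1 - r/d) * (v - u)" by (simp add: p_def algebra_simps)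
    moreover have "1 - r/d \<ge> 0" using rd d0 by simp
    ultimately have "dist v p = (1 - r/d) * d"
      unfolding dist_norm by (simp only: norm_mult norm_of_real d_def dist_norm norm_minus_commute)
    then have vp: "dist v p = d - r" using d0 by (simp add: algebra_simps diff_divide_distrib)
    have "p - w = of_real (r / d) * (v - u) - (w - u)" by (simp add: p_def)
    then have "dist p w \<le> 2 * s * r" using pw by (simp only: dist_norm)
    then have "dist v w \<le> d - r + 2 * s * r" using vp dist_triangle[of v w p] by linarith
    then have le: "r * (1 - 2 * s) \<le> d - dist v w" by (simp add: algebra_simps)
    have pos: "0 < r * (1 - 2 * s)" using r0 s1 by simp
    have "r / (d - dist v w) \<le> r / (r * (1 - 2 * s))"
      using le pos r0 by (intro divide_left_mono) auto
    also have "\<dots> = inverse (1 - 2 * s)" using r0 by (simp add: inverse_eq_divide)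
    finally show "dist u w / (dist u v - dist v w) \<le> inverse (1 - 2 * sin (\<alpha> / 2))"
      by (simp add: r_def d_def s_def)
  qed
qed

end
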